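(* Let $d_\Phi=1$, let $\beta_\Phi\in\mathbb{R}^{d_Z}$ have all components nonzero, let $\beta_y\in\mathbb{R}^{d_Z}$, and let $b$ be an integer with $0\le b<d_Z$. Then $\mathcal{T}_{L_0}(b)=\{\theta\in\mathbb{R}:\|\beta_y-\theta\beta_\Phi\|_0\le b\}$ satisfies $$|\mathcal{T}_{L_0}(b)|\le\left\lfloor\frac{d_Z}{d_Z-b}\right\rfloor\le d_Z.$$ In particular, if $b<d_Z/2$ then $|\mathcal{T}_{L_0}(b)|\le1$ (point identification).
   Context: $\|v\|_0$ is the number of nonzero components of $v$. In the model $Y:=\theta^*\Phi(X)+g_y(Z,\epsilon_y)$ with scalar $\Phi$, $\beta_\Phi=\mathrm{Cov}(\Phi(X),Z)$, $\beta_y=\mathrm{Cov}(Y,Z)$, and $\|\beta_y-\theta\beta_\Phi\|_0\le b$ expresses that at most $b$ of the $d_Z$ candidate instruments are invalid. *)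

theory Defs
  imports "HOL-Analysis.Analysis"
begin

definition l0norm :: "real ^ 'n \<Rightarrow> nat" where
  "l0norm v = card {i. v $ i \<noteq> 0}"

definition T_L0 :: "real ^ 'n \<Rightarrow> real ^ 'n \<Rightarrow> nat \<Rightarrow> real set" where
  "T_L0 beta_y beta_Phi b = {theta. l0norm (beta_y - theta *\<^sub>R beta_Phi) \<le> b}"

end

theory Submission
  imports Defs
begin

theorem mainTheorem5:
  fixes beta_Phi beta_y :: "real ^ 'n" and b :: nat
  assumes "\<forall>i. beta_Phi $ i \<noteq> 0"
    and "b < CARD('n)"
  shows "finite (T_L0 beta_y beta_Phi b)
       \<and> real (card (T_L0 beta_y beta_Phi b)) \<le> of_int \<lfloor>real CARD('n) / real (CARD('n) - b)\<rfloor>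
       \<and> \<lfloor>real CARD('n) / real (CARD('n) - b)\<rfloor> \<le> int CARD('n)
       \<and> (real b < real CARD('n) / 2 \<longrightarrow> card (T_L0 beta_y beta_Phi b) \<le> 1)"
proof -
  define n where "n = CARD('n)"
  define T where "T = T_L0 beta_y beta_Phi b"
  define Z where "Z = (\<lambda>t. {i. beta_y $ i = t * beta_Phi $ i})"
  have nz: "beta_Phi $ i \<noteq> 0" for i using assms(1) by blast
  have cardZ: "card (Z t) \<ge> n - b" if "t \<in> T" for t
  proof -
    have eq: "{i. (beta_y - t *\<^sub>R beta_Phi) $ i \<noteq> 0} = UNIV - Z t"
      by (auto simp: Z_def)
    have "card (UNIV - Z t) \<le> b" using that eq
      by (simp add: T_def T_L0_def l0norm_def)
    moreover have "card (UNIV - Z t) = n - card (Z t)"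
      by (simp add: card_Diff_subset n_def)
    ultimately show ?thesis by simp
  qed
  have sub: "T \<subseteq> (\<lambda>i. beta_y $ i / beta_Phi $ i) ` UNIV"
  proof
    fix t assume t: "t \<in> T"
    have "card (Z t) > 0" using cardZ[OF t] assms(2) n_def by linarith
    then obtain i where "i \<in> Z t" by (metis card.empty ex_in_conv less_irrefl)
    hence "t = beta_y $ i / beta_Phi $ i" using nz[of i] by (simp add: Z_def field_simps)
    thus "t \<in> (\<lambda>i. beta_y $ i / beta_Phi $ i) ` UNIV" by blast
  qed
  have fin: "finite T" by (rule finite_subset[OF sub]) simp
  have disj: "\<forall>s\<in>T. \<forall>t\<in>T. s \<noteq> t \<longrightarrow> Z s \<inter> Z t = {}"
    using nz by (auto simp: Z_def)
  have "card (\<Union>t\<in>T. Z t) = (\<Sum>t\<in>T. card (Z t))"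
    by (rule card_UN_disjoint[OF fin]) (use disj in auto)
  moreover have "card (\<Union>t\<in>T. Z t) \<le> n" unfolding n_def by (rule card_mono) auto
  moreover have "(\<Sum>t\<in>T. card (Z t)) \<ge> card T * (n - b)"
    using sum_mono[of T "\<lambda>_. n - b" "\<lambda>t. card (Z t)"] cardZ by simp
  ultimately have key: "card T * (n - b) \<le> n" by linarith
  have pos: "real (n - b) > 0" using assms(2) n_def by simp
  have r: "real (card T) * real (n - b) \<le> real n" using key
    by (metis of_nat_le_iff of_nat_mult)
  have c1: "real (card T) \<le> real n / real (n - b)" using r pos by (simp add: field_simps)
  have c2: "real (card T) \<le> of_int \<lfloor>real n / real (n - b)\<rfloor>"
  proof -
    have "int (card T) \<le> \<lfloor>real n / real (n - b)\<rfloor>" using c1 by (simp add: le_floor_iff)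
    hence "real_of_int (int (card T)) \<le> of_int \<lfloor>real n / real (n - b)\<rfloor>" by (simp only: of_int_le_iff)
    thus ?thesis by simp
  qed
  have "real n / real (n - b) \<le> real n"
  proof -
    have "real (n - b) \<ge> 1" using assms(2) n_def by simp
    hence "real n * 1 \<le> real n * real (n - b)" by (intro mult_left_mono) auto
    thus ?thesis using pos by (simp add: divide_le_eq)
  qed
  hence c3: "\<lfloor>real n / real (n - b)\<rfloor> \<le> int n" by (simp add: floor_le_iff)
  have c4: "card T \<le> 1" if h: "real b < real n / 2"
  proof -
    have "real n / real (n - b) < 2" using h pos assms(2) n_def
      by (simp add: divide_less_eq of_nat_diff)
    hence "real (card T) < 2" by (rule order_le_less_trans[OF c1])
    thus ?thesis by simp
  qed
  show ?thesis using fin c2 c3 c4 unfolding T_def n_def by blast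
qed

end
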